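(* Let $D$ be a dissection of the unit square $[0,1]^2$ into $n$ triangles. Then there exists a dissection $D'$ of the unit square into $n+2$ triangles with $\mathcal{R}(D')=\frac{n}{n+2}\mathcal{R}(D)$ and $\mathrm{RMS}(D')=\bigl(\frac{n}{n+2}\bigr)^{3/2}\mathrm{RMS}(D)$.
   Context: A dissection of a polygon $P$ of area $E$ is a finite set of triangles with disjoint interiors whose union is $P$. If its triangles have areas $a_1,\dots,a_n$, the range is $\mathcal{R}(D)=\max_{i,j}|a_i-a_j|$ and $\mathrm{RMS}(D)=\sqrt{\frac1n\sum_{i=1}^n(a_i-E/n)^2}$. *)

theory Defs
  imports "HOL-Analysis.Analysis"
begin

definition triangle :: "(real \<times> real) set \<Rightarrow> bool" where
  "triangle T \<longleftrightarrow> (\<exists>a b c. \<not> collinear {a, b, c} \<and> T = convex hull {a, b, c})"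

definition area :: "(real \<times> real) set \<Rightarrow> real" where
  "area S = measure lebesgue S"

definition dissection :: "(real \<times> real) set \<Rightarrow> (real \<times> real) set set \<Rightarrow> bool" where
  "dissection P D \<longleftrightarrow> finite D \<and> (\<forall>T\<in>D. triangle T)
     \<and> (\<forall>T\<in>D. \<forall>T'\<in>D. T \<noteq> T' \<longrightarrow> interior T \<inter> interior T' = {})
     \<and> \<Union>D = P"

definition unit_square :: "(real \<times> real) set" where
  "unit_square = {0..1} \<times> {0..1}"

definition range_diss :: "(real \<times> real) set set \<Rightarrow> real" where
  "range_diss D = Max {\<bar>area T - area T'\<bar> | T T'. T \<in> D \<and> T' \<in> D}"

definition rms_diss :: "(real \<times> real) set \<Rightarrow> (real \<times> real) set set \<Rightarrow> real" where
  "rms_diss P D = sqrt ((1 / real (card D)) *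
     (\<Sum>T\<in>D. (area T - area P / real (card D))\<^sup>2))"

end

theory Submission
  imports Defs
begin

lemma sum_basis_prod: "(\<Sum>j\<in>(Basis::(real\<times>real) set). f j) = f (1,0) + f (0,1)"
  by (simp add: Basis_prod_def add.commute)

lemma stretch_emeasure:
  fixes S :: "(real\<times>real) set" and k :: real
  assumes S: "S \<in> sets borel" and k: "k > 0"
  shows "emeasure lborel ((\<lambda>p. (fst p, k * snd p)) ` S) = ennreal k * emeasure lborel S"
proof -
  define c where "c = (\<lambda>j::real\<times>real. if j = (0,1) then k else 1)"
  define T where "T = (\<lambda>x::real\<times>real. 0 + (\<Sum>j\<in>Basis. (c j * (x \<bullet> j)) *\<^sub>R j))"
  have Teq: "T = (\<lambda>p. (fst p, k * snd p))"
    by (auto simp: T_def c_def sum_basis_prod inner_prod_def prod_eq_iff)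
  have cne: "\<And>j. j \<in> Basis \<Longrightarrow> c j \<noteq> 0" using k by (auto simp: c_def)
  have L: "lborel = density (distr lborel borel T) (\<lambda>_. (\<Prod>j\<in>Basis. \<bar>c j\<bar>))"
    unfolding T_def by (rule lborel_affine_euclidean[OF cne])
  have pr: "(\<Prod>j\<in>(Basis::(real\<times>real) set). \<bar>c j\<bar>) = k"
    using k by (simp add: Basis_prod_def c_def)
  have Tm: "T \<in> borel \<rightarrow>\<^sub>M borel" unfolding Teq by (intro borel_measurable_continuous_onI continuous_intros)
  define G where "G = (\<lambda>p::real\<times>real. (fst p, snd p / k))"
  have Gm: "G \<in> borel \<rightarrow>\<^sub>M borel" unfolding G_def using k by (intro borel_measurable_continuous_onI continuous_intros) auto
  have img: "T ` S = G -` S" 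
  proof (intro set_eqI iffI)
    fix p assume "p \<in> T ` S" then show "p \<in> G -` S" using k by (auto simp: Teq G_def)
  next
    fix p assume p: "p \<in> G -` S"
    have "p = T (G p)" using k by (simp add: Teq G_def)
    then show "p \<in> T ` S" using p by blast
  qed
  have imgB: "T ` S \<in> sets borel" unfolding img
    using measurable_sets[OF Gm S] by simp
  have pre: "T -` (T ` S) = S" using k by (auto simp: Teq)
  have "emeasure lborel (T ` S) = emeasure (density (distr lborel borel T) (\<lambda>_. ennreal k)) (T ` S)"
    by (subst L) (simp only: pr)
  also have "\<dots> = ennreal k * emeasure (distr lborel borel T) (T ` S)"
    using imgB by (simp add: emeasure_density nn_integral_cmult_indicator)
  also have "emeasure (distr lborel borel T) (T ` S) = emeasure lborel S"
    using imgB Tm by (simp add: emeasure_distr pre)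
  finally show ?thesis by (simp add: Teq)
qed

lemma rect_area:
  fixes a b c d :: real assumes "a \<le> b" "c \<le> d"
  shows "measure lebesgue ({a..b} \<times> {c..d}) = (b - a) * (d - c)"
proof -
  have e: "{a..b} \<times> {c..d} = cbox (a,c) (b,d)" by (simp add: cbox_Pair_eq)
  show ?thesis unfolding e using assms
    by (simp add: content_Pair)
qed

lemma reflect_emeasure:
  fixes S :: "(real\<times>real) set"
  assumes S: "S \<in> sets borel"
  shows "emeasure lborel ((\<lambda>p. t - p) ` S) = emeasure lborel S"
proof -
  define T where "T = (\<lambda>x::real\<times>real. t + (-1::real) *\<^sub>R x)"
  have Teq: "T = (\<lambda>p. t - p)" by (auto simp: T_def)
  have L: "lborel = density (distr lborel borel T) (\<lambda>_. \<bar>-1::real\<bar> ^ DIM(real\<times>real))"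
    unfolding T_def by (rule lborel_affine) simp
  have L': "lborel = distr lborel borel T" using L by (simp add: density_1)
  have Tm: "T \<in> borel \<rightarrow>\<^sub>M borel" unfolding Teq by (intro borel_measurable_continuous_onI continuous_intros)
  have img: "T ` S = T -` S"
  proof (intro set_eqI iffI)
    fix p assume "p \<in> T ` S" then show "p \<in> T -` S" by (auto simp: Teq)
  next
    fix p assume p: "p \<in> T -` S"
    have "p = T (T p)" by (simp add: Teq)
    then show "p \<in> T ` S" using p by blast
  qed
  have imgB: "T ` S \<in> sets borel" unfolding img
    using measurable_sets[OF Tm S] by simp
  have pre: "T -` (T ` S) = S" by (auto simp: Teq)
  have "emeasure lborel (T ` S) = emeasure (distr lborel borel T) (T ` S)"
    by (subst L') simp
  also have "\<dots> = emeasure lborel S"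
    using imgB Tm by (simp add: emeasure_distr pre)
  finally show ?thesis by (simp add: Teq)
qed

lemma measure_via_lborel:
  fixes S :: "(real\<times>real) set"
  assumes "S \<in> sets borel"
  shows "measure lebesgue S = enn2real (emeasure lborel S)"
  using assms by (simp add: measure_def)

lemma stretch_area:
  fixes S :: "(real\<times>real) set" and k :: real
  assumes S: "S \<in> sets borel" and k: "k > 0"
  shows "measure lebesgue ((\<lambda>p. (fst p, k * snd p)) ` S) = k * measure lebesgue S"
proof -
  define G where "G = (\<lambda>p::real\<times>real. (fst p, snd p / k))"
  have Gm: "G \<in> borel \<rightarrow>\<^sub>M borel" unfolding G_def using k by (intro borel_measurable_continuous_onI continuous_intros) auto
  have img: "(\<lambda>p. (fst p, k * snd p)) ` S = G -` S"
  proof (intro set_eqI iffI)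
    fix p assume "p \<in> (\<lambda>p. (fst p, k * snd p)) ` S" then show "p \<in> G -` S" using k by (auto simp: G_def)
  next
    fix p assume p: "p \<in> G -` S"
    have "p = (\<lambda>p. (fst p, k * snd p)) (G p)" using k by (simp add: G_def)
    then show "p \<in> (\<lambda>p. (fst p, k * snd p)) ` S" using p by blast
  qed
  have B: "(\<lambda>p. (fst p, k * snd p)) ` S \<in> sets borel" unfolding img
    using measurable_sets[OF Gm S] by simp
  show ?thesis using k
    by (simp add: measure_via_lborel[OF B] measure_via_lborel[OF S] stretch_emeasure[OF S k] enn2real_mult)
qed

lemma reflect_area:
  fixes S :: "(real\<times>real) set"
  assumes S: "S \<in> sets borel"
  shows "measure lebesgue ((\<lambda>p. t - p) ` S) = measure lebesgue S"
proof -
  have Tm: "(\<lambda>p::real\<times>real. t - p) \<in> borel \<rightarrow>\<^sub>M borel" by (intro borel_measurable_continuous_onI continuous_intros)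
  have img: "(\<lambda>p. t - p) ` S = (\<lambda>p. t - p) -` S"
  proof (intro set_eqI iffI)
    fix p assume "p \<in> (\<lambda>p. t - p) ` S" then show "p \<in> (\<lambda>p. t - p) -` S" by auto
  next
    fix p assume p: "p \<in> (\<lambda>p. t - p) -` S"
    have "p = t - (t - p)" by simp
    then show "p \<in> (\<lambda>p. t - p) ` S" using p by blast
  qed
  have B: "(\<lambda>p. t - p) ` S \<in> sets borel" unfolding img
    using measurable_sets[OF Tm S] by simp
  show ?thesis by (simp add: measure_via_lborel[OF B] measure_via_lborel[OF S] reflect_emeasure[OF S])
qed

lemma triangle_compact: "triangle T \<Longrightarrow> compact T"
  unfolding triangle_def by (auto intro: finite_imp_compact_convex_hull)

lemma triangle_convex: "triangle T \<Longrightarrow> convex T"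
  unfolding triangle_def by auto

lemma triangle_borel: "triangle T \<Longrightarrow> T \<in> sets borel"
  by (simp add: borel_compact triangle_compact)

lemma inter_negligible:
  assumes "triangle T" "triangle T'" "interior T \<inter> interior T' = {}"
  shows "negligible (T \<inter> T')"
proof -
  have "T \<inter> T' \<subseteq> frontier T \<union> frontier T'"
    using assms compact_imp_closed[OF triangle_compact] by (auto simp: frontier_def)
  moreover have "negligible (frontier T \<union> frontier T')"
    using assms by (simp add: negligible_convex_frontier triangle_convex)
  ultimately show ?thesis using negligible_subset by blast
qed

lemma dissection_area_sum:
  assumes "dissection P D"
  shows "(\<Sum>T\<in>D. area T) = area P"
proof -
  have f: "finite D" and tri: "\<And>T. T \<in> D \<Longrightarrow> triangle T" and U: "\<Union>D = P"
    using assms by (auto simp: dissection_def)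
  have "measure lebesgue (\<Union>D) = (\<Sum>T\<in>D. measure lebesgue T)"
  proof (rule measure_negligible_finite_Union[OF f])
    show "\<And>S. S \<in> D \<Longrightarrow> S \<in> lmeasurable" by (simp add: lmeasurable_compact triangle_compact tri)
    show "pairwise (\<lambda>S T. negligible (S \<inter> T)) D"
    proof (unfold pairwise_def, intro ballI impI)
      fix S T assume "S \<in> D" "T \<in> D" "S \<noteq> T"
      then show "negligible (S \<inter> T)" using assms tri unfolding dissection_def
        by (intro inter_negligible) auto
    qed
  qed
  then show ?thesis by (simp add: area_def U)
qed

lemma collinear_linear_image:
  assumes "linear g" "collinear S" shows "collinear (g ` S)"
proof -
  obtain u where u: "\<forall>x\<in>S. \<forall>y\<in>S. \<exists>c. x - y = c *\<^sub>R u" using assms(2) by (auto simp: collinear_def)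
  have "\<forall>x\<in>g ` S. \<forall>y\<in>g ` S. \<exists>c. x - y = c *\<^sub>R g u"
  proof (intro ballI)
    fix x y assume "x \<in> g ` S" "y \<in> g ` S"
    then obtain a b where ab: "a \<in> S" "b \<in> S" "x = g a" "y = g b" by auto
    then obtain c where "a - b = c *\<^sub>R u" using u by blast
    then have "g a - g b = c *\<^sub>R g u" using assms(1)
      by (metis linear_diff linear_scale)
    then show "\<exists>c. x - y = c *\<^sub>R g u" using ab by blast
  qed
  then show ?thesis by (auto simp: collinear_def)
qed

definition topA :: "real \<Rightarrow> (real\<times>real) set" where
  "topA h = convex hull {(0,h),(1,h),(0,1)}"
definition topB :: "real \<Rightarrow> (real\<times>real) set" where
  "topB h = convex hull {(1,1),(0,1),(1,h)}"

lemma noncol3: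
  fixes a b c :: "real \<times> real"
  assumes "(fst a - fst b) * (snd c - snd b) \<noteq> (snd a - snd b) * (fst c - fst b)"
  shows "\<not> collinear {a, b, c}"
proof
  assume "collinear {a,b,c}"
  then obtain u where u: "\<forall>x\<in>{a,b,c}. \<forall>y\<in>{a,b,c}. \<exists>t. x - y = t *\<^sub>R u"
    unfolding collinear_def by blast
  obtain s where s: "a - b = s *\<^sub>R u" using u by blast
  obtain t where t: "c - b = t *\<^sub>R u" using u by blast
  have "fst a - fst b = s * fst u" "snd a - snd b = s * snd u"
       "fst c - fst b = t * fst u" "snd c - snd b = t * snd u"
    using arg_cong[OF s, of fst] arg_cong[OF s, of snd] arg_cong[OF t, of fst] arg_cong[OF t, of snd]
    by auto
  then show False using assms by (simp add: algebra_simps)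
qed

lemma topB_reflect: "topB h = (\<lambda>p. (1,1+h) - p) ` topA h"
proof -
  have e: "(\<lambda>p. (1,1+h) - p) = (\<lambda>x. (1,1+h) + (-1::real) *\<^sub>R x)" by auto
  have "(\<lambda>p. (1,1+h) - p) ` topA h = convex hull ((\<lambda>p. (1,1+h) - p) ` {(0,h),(1,h),(0,1)})"
    unfolding topA_def e by (rule convex_hull_affinity[symmetric])
  also have "(\<lambda>p. (1,1+h) - p) ` {(0::real,h),(1,h),(0,1)} = {(1::real,1),(0,1),(1,h)}" by simp
  finally show ?thesis by (simp add: topB_def)
qed

lemma topA_tri: "(h::real) < 1 \<Longrightarrow> triangle (topA h)"
  unfolding triangle_def topA_def
  apply (rule exI[of _ "(0,h)"], rule exI[of _ "(1,h)"], rule exI[of _ "(0,1)"])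
  apply (simp add: noncol3)
  done

lemma topB_tri: "(h::real) < 1 \<Longrightarrow> triangle (topB h)"
  unfolding triangle_def topB_def
  apply (rule exI[of _ "(1,1)"], rule exI[of _ "(0,1)"], rule exI[of _ "(1,h)"])
  apply (simp add: noncol3)
  done

lemma topA_sub: assumes "h \<le> 1" shows "topA h \<subseteq> {p. (1-h, 1) \<bullet> p \<le> 1} \<inter> {p. (0,1) \<bullet> p \<ge> h}"
  unfolding topA_def
  by (intro hull_minimal) (use assms in \<open>auto intro!: convex_Int convex_halfspace_le convex_halfspace_ge\<close>)

lemma topB_sub: assumes "h \<le> 1" shows "topB h \<subseteq> {p. (1-h, 1) \<bullet> p \<ge> 1} \<inter> {p. (0,1) \<bullet> p \<ge> h}"
  unfolding topB_def
  by (intro hull_minimal) (use assms in \<open>auto intro!: convex_Int convex_halfspace_le convex_halfspace_ge\<close>)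

lemma top_interiors:
  assumes "h \<le> 1"
  shows "interior (topA h) \<subseteq> {p. (1-h, 1) \<bullet> p < 1} \<inter> {p. (0,1) \<bullet> p > h}"
    and "interior (topB h) \<subseteq> {p. (1-h, 1) \<bullet> p > 1} \<inter> {p. (0,1) \<bullet> p > h}"
proof -
  have n1: "(1-h, 1::real) \<noteq> 0" and n2: "(0::real, 1::real) \<noteq> 0" by (auto simp: zero_prod_def)
  have "interior (topA h) \<subseteq> interior ({p. (1-h, 1) \<bullet> p \<le> 1} \<inter> {p. (0,1) \<bullet> p \<ge> h})"
    by (rule interior_mono[OF topA_sub[OF assms]])
  then show "interior (topA h) \<subseteq> {p. (1-h, 1) \<bullet> p < 1} \<inter> {p. (0,1) \<bullet> p > h}"
    by (simp add: n1 n2 interior_Int)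
  have "interior (topB h) \<subseteq> interior ({p. (1-h, 1) \<bullet> p \<ge> 1} \<inter> {p. (0,1) \<bullet> p \<ge> h})"
    by (rule interior_mono[OF topB_sub[OF assms]])
  then show "interior (topB h) \<subseteq> {p. (1-h, 1) \<bullet> p > 1} \<inter> {p. (0,1) \<bullet> p > h}"
    by (simp add: n1 n2 interior_Int)
qed

lemma top_disjoint: "h \<le> 1 \<Longrightarrow> interior (topA h) \<inter> interior (topB h) = {}"
  using top_interiors by fastforce

lemma memA:
  fixes x y h w :: real
  assumes h: "0 < h" "h < 1" and x: "0 \<le> x" "x \<le> 1" and w: "0 \<le> w" "(1-h) * w = y - h" and u: "0 \<le> 1 - x - w"
  shows "(x,y) \<in> convex hull {(0,h),(1,h),(0,1)}"
proof -
  have e2: "(1-x-w)*h + x*h + w = y"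
  proof -
    have "(1-x-w)*h + x*h + w = h + (1-h)*w" by (simp add: algebra_simps)
    then show ?thesis using w(2) by linarith
  qed
  have eq: "(x,y) = (1 - x - w) *\<^sub>R (0,h) + x *\<^sub>R (1,h) + w *\<^sub>R (0,1)"
    using e2 by simp
  have "\<exists>a b c. (x,y) = a *\<^sub>R (0,h) + b *\<^sub>R (1,h) + c *\<^sub>R (0,1) \<and> 0 \<le> a \<and> 0 \<le> b \<and> 0 \<le> c \<and> a + b + c = 1"
    apply (rule exI[of _ "1-x-w"], rule exI[of _ x], rule exI[of _ w])
    using eq u w x by simp
  then show ?thesis unfolding convex_hull_3 by blast
qed
lemma memB:
  fixes x y h w :: real
  assumes h: "0 < h" "h < 1" and x: "0 \<le> x" "x \<le> 1" and w: "0 \<le> w" "(1-h) * w = 1 - y" and u: "0 \<le> x - w"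
  shows "(x,y) \<in> convex hull {(1,1),(0,1),(1,h)}"
proof -
  have e2: "(x - w) + (1 - x) + w*h = y"
  proof -
    have "(x - w) + (1 - x) + w*h = 1 - (1-h)*w" by (simp add: algebra_simps)
    then show ?thesis using w(2) by linarith
  qed
  have eq: "(x,y) = (x - w) *\<^sub>R (1,1) + (1 - x) *\<^sub>R (0,1) + w *\<^sub>R (1,h)"
    using e2 by simp
  have "\<exists>a b c. (x,y) = a *\<^sub>R (1,1) + b *\<^sub>R (0,1) + c *\<^sub>R (1,h) \<and> 0 \<le> a \<and> 0 \<le> b \<and> 0 \<le> c \<and> a + b + c = 1"
    apply (rule exI[of _ "x - w"], rule exI[of _ "1 - x"], rule exI[of _ w])
    using eq u w x by simp
  then show ?thesis unfolding convex_hull_3 by blast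
qed
lemma top_union:
  assumes h: "0 < h" "h < 1"
  shows "topA h \<union> topB h = {0..1} \<times> {h..1}"
proof
  have c: "convex ({0..1::real} \<times> {h..1})" by (intro convex_Times) auto
  show "topA h \<union> topB h \<subseteq> {0..1} \<times> {h..1}"
    unfolding topA_def topB_def using h by (simp add: subset_hull[of convex, OF c])
  show "{0..1} \<times> {h..1} \<subseteq> topA h \<union> topB h"
  proof
    fix p assume p: "p \<in> {0..1::real} \<times> {h..1}"
    obtain x y where xy: "p = (x,y)" by (cases p)
    have x: "0 \<le> x" "x \<le> 1" and y: "h \<le> y" "y \<le> 1" using p xy by auto
    show "p \<in> topA h \<union> topB h"
    proof (cases "(1-h)*x + y \<le> 1")
      case True
      define w where "w = (y-h)/(1-h)"
      have w: "0 \<le> w" "(1-h) * w = y - h" using h y by (auto simp: w_def)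
      have u: "0 \<le> 1 - x - w"
      proof -
        have "(1-h)*(1 - x - w) = 1 - h - (1-h)*x - (1-h)*w" by (simp add: algebra_simps)
        then have "(1-h)*(1 - x - w) = 1 - h - (1-h)*x - (y - h)" using w(2) by linarith
        also have "\<dots> \<ge> 0" using True by simp
        finally have "(1-h) * 0 \<le> (1-h)*(1 - x - w)" by simp
        then show ?thesis using h by (subst (asm) mult_le_cancel_left_pos) auto
      qed
      have "p \<in> topA h" unfolding topA_def xy using memA[OF h x w u] .
      then show ?thesis by simp
    next
      case False
      define w where "w = (1-y)/(1-h)"
      have w: "0 \<le> w" "(1-h) * w = 1 - y" using h y by (auto simp: w_def)
      have u: "0 \<le> x - w"
      proof -
        have "(1-h)*(x - w) = (1-h)*x - (1-h)*w" by (simp add: algebra_simps)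
        then have "(1-h)*(x - w) = (1-h)*x - (1 - y)" using w(2) by linarith
        also have "\<dots> \<ge> 0" using False by simp
        finally have "(1-h) * 0 \<le> (1-h)*(x - w)" by simp
        then show ?thesis using h by (subst (asm) mult_le_cancel_left_pos) auto
      qed
      have "p \<in> topB h" unfolding topB_def xy using memB[OF h x w u] .
      then show ?thesis by simp
    qed
  qed
qed

lemma top_ne: "h < 1 \<Longrightarrow> topA h \<noteq> topB h"
proof
  assume "h < 1" "topA h = topB h"
  have "(0,h) \<in> topA h" unfolding topA_def by (simp add: hull_inc)
  then have "(0,h) \<in> topB h" using \<open>topA h = topB h\<close> by simp
  then show False using topB_sub[of h] \<open>h < 1\<close> by auto
qed

lemma top_areas:
  assumes h: "0 < h" "h < 1"
  shows "area (topA h) = (1 - h)/2" "area (topB h) = (1 - h)/2"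
proof -
  have eq: "area (topB h) = area (topA h)" unfolding area_def topB_reflect
    by (rule reflect_area[OF triangle_borel[OF topA_tri[OF h(2)]]])
  have "measure lebesgue (\<Union>{topA h, topB h}) = (\<Sum>S\<in>{topA h, topB h}. measure lebesgue S)"
  proof (rule measure_negligible_finite_Union)
    show "\<And>S. S \<in> {topA h, topB h} \<Longrightarrow> S \<in> lmeasurable"
      using h by (auto simp: lmeasurable_compact triangle_compact topA_tri topB_tri)
    show "pairwise (\<lambda>S T. negligible (S \<inter> T)) {topA h, topB h}"
      using h inter_negligible[OF topA_tri topB_tri top_disjoint, of h]
      by (auto simp: pairwise_def Int_commute)
  qed simp
  then have "area (topA h) + area (topB h) = 1 - h"
    using top_union[OF h] top_ne[OF h(2)] h by (simp add: area_def rect_area)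
  then show "area (topA h) = (1 - h)/2" "area (topB h) = (1 - h)/2" using eq by auto
qed

definition stretch :: "real \<Rightarrow> real\<times>real \<Rightarrow> real\<times>real" where
  "stretch h = (\<lambda>p. (fst p, h * snd p))"

lemma stretch_linear: "linear (stretch h)"
  by (rule linearI) (auto simp: stretch_def algebra_simps)

lemma stretch_inj: "h \<noteq> 0 \<Longrightarrow> inj (stretch h)"
  by (auto simp: inj_def stretch_def prod_eq_iff)

lemma stretch_tri:
  assumes h: "h > 0" and T: "triangle T"
  shows "triangle (stretch h ` T)"
proof -
  obtain a b c where nc: "\<not> collinear {a,b,c}" and Te: "T = convex hull {a,b,c}"
    using T unfolding triangle_def by blast
  have "stretch h ` T = convex hull (stretch h ` {a,b,c})"
    unfolding Te by (rule convex_hull_linear_image[OF stretch_linear])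
  also have "stretch h ` {a,b,c} = {stretch h a, stretch h b, stretch h c}" by simp
  finally have e: "stretch h ` T = convex hull {stretch h a, stretch h b, stretch h c}" .
  have "\<not> collinear {stretch h a, stretch h b, stretch h c}"
  proof
    assume "collinear {stretch h a, stretch h b, stretch h c}"
    then have "collinear (stretch (1/h) ` {stretch h a, stretch h b, stretch h c})"
      by (rule collinear_linear_image[OF stretch_linear])
    moreover have "stretch (1/h) ` {stretch h a, stretch h b, stretch h c} = {a,b,c}"
      using h by (simp add: stretch_def)
    ultimately show False using nc by simp
  qed
  then show ?thesis unfolding triangle_def e by blast
qed

lemma stretch_area_tri:
  assumes h: "h > 0" and T: "triangle T"
  shows "area (stretch h ` T) = h * area T"
  unfolding area_def stretch_def using stretch_area[OF triangle_borel[OF T] h] by simp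

lemma stretch_interior:
  assumes h: "h > 0"
  shows "interior (stretch h ` T) = stretch h ` interior T"
  using h by (simp add: interior_injective_linear_image stretch_linear stretch_inj)

lemma stretch_square:
  assumes h: "h > 0"
  shows "stretch h ` unit_square = {0..1} \<times> {0..h}"
proof (intro set_eqI iffI)
  fix p assume "p \<in> stretch h ` unit_square"
  then show "p \<in> {0..1} \<times> {0..h}" using h
    by (auto simp: stretch_def unit_square_def)
next
  fix p :: "real \<times> real" assume p: "p \<in> {0..1} \<times> {0..h}"
  have "p = stretch h (fst p, snd p / h)" using h by (simp add: stretch_def)
  moreover have "(fst p, snd p / h) \<in> unit_square" using p h
    by (auto simp: unit_square_def)
  ultimately show "p \<in> stretch h ` unit_square" by blast
qed

lemma stretch_sub_interior:
  assumes h: "h > 0" and T: "T \<subseteq> unit_square"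
  shows "interior (stretch h ` T) \<subseteq> {p. (0,1) \<bullet> p < h}"
proof -
  have "stretch h ` T \<subseteq> {p. (0,1) \<bullet> p \<le> h}"
    using image_mono[OF T, of "stretch h"] stretch_square[OF h] by auto
  then have "interior (stretch h ` T) \<subseteq> interior {p. (0,1) \<bullet> p \<le> h}"
    by (rule interior_mono)
  also have "\<dots> = {p. (0,1) \<bullet> p < h}"
    by (rule interior_halfspace_le) (simp add: zero_prod_def)
  finally show ?thesis .
qed

lemma range_diss_eq:
  assumes "finite D" "D \<noteq> {}"
  shows "range_diss D = Max (area ` D) - Min (area ` D)"
  unfolding range_diss_def
proof (rule Max_eqI)
  have "{\<bar>area T - area T'\<bar> | T T'. T \<in> D \<and> T' \<in> D} = (\<lambda>(T,T'). \<bar>area T - area T'\<bar>) ` (D \<times> D)"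
    by auto
  then show "finite {\<bar>area T - area T'\<bar> | T T'. T \<in> D \<and> T' \<in> D}"
    using assms by simp
  have fin: "finite (area ` D)" "area ` D \<noteq> {}" using assms by auto
  show "y \<le> Max (area ` D) - Min (area ` D)" if yin: "y \<in> {\<bar>area T - area T'\<bar> | T T'. T \<in> D \<and> T' \<in> D}" for y
  proof -
    obtain T T' where y: "y = \<bar>area T - area T'\<bar>" "T \<in> D" "T' \<in> D" using yin by blast
    have "area T \<le> Max (area ` D)" "area T' \<le> Max (area ` D)"
         "Min (area ` D) \<le> area T" "Min (area ` D) \<le> area T'"
      using fin y by auto
    then show ?thesis using y by linarith
  qed
  obtain T where T: "T \<in> D" "area T = Max (area ` D)"
    using Max_in[OF fin] by auto
  obtain T' where T': "T' \<in> D" "area T' = Min (area ` D)"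
    using Min_in[OF fin] by auto
  have "Min (area ` D) \<le> area T" using fin(1) T(1) by (simp add: Min_le)
  then have "Min (area ` D) \<le> Max (area ` D)" using T(2) by simp
  then have "Max (area ` D) - Min (area ` D) = \<bar>area T - area T'\<bar>" using T T' by simp
  then show "Max (area ` D) - Min (area ` D) \<in> {\<bar>area T - area T'\<bar> | T T'. T \<in> D \<and> T' \<in> D}"
    using T T' by blast
qed

theorem lemma7p1:
  fixes D :: "(real \<times> real) set set" and n :: nat
  assumes "dissection unit_square D" and "card D = n"
  shows "\<exists>D'. dissection unit_square D' \<and> card D' = n + 2
           \<and> range_diss D' = (real n / real (n + 2)) * range_diss D
           \<and> rms_diss unit_square D' = (real n / real (n + 2)) powr (3/2) * rms_diss unit_square D"
proof -
  have finD: "finite D" and tri: "\<And>T. T \<in> D \<Longrightarrow> triangle T"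
    and disj: "\<And>T T'. T \<in> D \<Longrightarrow> T' \<in> D \<Longrightarrow> T \<noteq> T' \<Longrightarrow> interior T \<inter> interior T' = {}"
    and U: "\<Union>D = unit_square"
    using assms(1) unfolding dissection_def by auto
  have "(0,0) \<in> unit_square" by (simp add: unit_square_def)
  then have Dne: "D \<noteq> {}" using U by auto
  then have "card D > 0" using finD by (simp add: card_gt_0_iff)
  then have n1: "n \<ge> 1" using assms(2) by simp
  have sq_area: "area unit_square = 1" unfolding area_def unit_square_def by (simp add: rect_area)
  have sumD: "(\<Sum>T\<in>D. area T) = 1" using dissection_area_sum[OF assms(1)] sq_area by simp
  define h where "h = real n / real (n+2)"
  have h0: "0 < h" using n1 by (simp add: h_def)
  have h1: "h < 1" by (simp add: h_def)
  have hn: "h * (1 / real n) = 1 / real (n+2)" using n1 by (simp add: h_def)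
  have htop: "(1 - h) / 2 = 1 / real (n+2)" by (simp add: h_def field_simps)
  define f where "f = stretch h"
  define D1 where "D1 = (\<lambda>T. f ` T) ` D"
  define D' where "D' = D1 \<union> {topA h, topB h}"
  have sub: "\<And>T. T \<in> D \<Longrightarrow> T \<subseteq> unit_square" using U by auto
  have injf: "inj f" unfolding f_def using h0 by (simp add: stretch_inj)
  have injD: "inj_on (\<lambda>T. f ` T) D"
    using injf by (simp add: inj_on_def inj_image_eq_iff)
  have cardD1: "card D1 = n" unfolding D1_def using card_image[OF injD] assms(2) by simp
  have finD1: "finite D1" unfolding D1_def using finD by simp
  have img_sub: "\<And>T. T \<in> D \<Longrightarrow> f ` T \<subseteq> {0..1} \<times> {0..h}"
    using sub stretch_square[OF h0] unfolding f_def by blast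
  have A_notin: "topA h \<notin> D1"
  proof
    assume "topA h \<in> D1"
    then obtain T where T: "T \<in> D" "topA h = f ` T" unfolding D1_def by auto
    have "(0,1) \<in> topA h" unfolding topA_def by (simp add: hull_inc)
    then show False using img_sub[OF T(1)] T(2) h1 by auto
  qed
  have B_notin: "topB h \<notin> D1"
  proof
    assume "topB h \<in> D1"
    then obtain T where T: "T \<in> D" "topB h = f ` T" unfolding D1_def by auto
    have "(1,1) \<in> topB h" unfolding topB_def by (simp add: hull_inc)
    then show False using img_sub[OF T(1)] T(2) h1 by auto
  qed
  have ABne: "topA h \<noteq> topB h" using top_ne[OF h1] .
  have cardD': "card D' = n + 2"
    unfolding D'_def using finD1 cardD1 A_notin B_notin ABne
    by (simp add: card_Un_disjoint)
  have finD': "finite D'" unfolding D'_def using finD1 by simp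
  have triD': "\<forall>T\<in>D'. triangle T"
    unfolding D'_def D1_def f_def using tri h0 h1
    by (auto intro: stretch_tri topA_tri topB_tri)
  have intD1: "\<And>T. T \<in> D \<Longrightarrow> interior (f ` T) \<subseteq> {p. (0,1) \<bullet> p < h}"
    unfolding f_def using h0 sub by (simp add: stretch_sub_interior)
  have intA: "interior (topA h) \<subseteq> {p. (0,1) \<bullet> p > h}" using top_interiors(1)[of h] h1 by auto
  have intB: "interior (topB h) \<subseteq> {p. (0,1) \<bullet> p > h}" using top_interiors(2)[of h] h1 by auto
  have disjD': "\<forall>T\<in>D'. \<forall>T'\<in>D'. T \<noteq> T' \<longrightarrow> interior T \<inter> interior T' = {}"
  proof (intro ballI impI)
    fix S S' assume S: "S \<in> D'" and S': "S' \<in> D'" and ne: "S \<noteq> S'"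
    have AD1: "interior (topA h) \<inter> interior (f ` T) = {}" if "T \<in> D" for T
      using intA intD1[OF that] by fastforce
    have BD1: "interior (topB h) \<inter> interior (f ` T) = {}" if "T \<in> D" for T
      using intB intD1[OF that] by fastforce
    have D1D1: "interior (f ` T) \<inter> interior (f ` T') = {}" if "T \<in> D" "T' \<in> D" "f ` T \<noteq> f ` T'" for T T'
    proof -
      have "T \<noteq> T'" using that by auto
      then have "interior T \<inter> interior T' = {}" using disj that by auto
      then have "f ` interior T \<inter> f ` interior T' = {}" using injf by (simp add: image_Int[symmetric])
      then show ?thesis unfolding f_def using h0 by (simp add: stretch_interior)
    qed
    have AB: "interior (topA h) \<inter> interior (topB h) = {}" using top_disjoint h1 by simp
    show "interior S \<inter> interior S' = {}"
    proof -
      consider (i) T where "T \<in> D" "S = f ` T" | (a) "S = topA h" | (b) "S = topB h"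
        using S unfolding D'_def D1_def by auto
      then show ?thesis
      proof cases
        case i
        consider (i') T' where "T' \<in> D" "S' = f ` T'" | (a') "S' = topA h" | (b') "S' = topB h"
          using S' unfolding D'_def D1_def by auto
        then show ?thesis
        proof cases
          case i' then show ?thesis using i D1D1 ne by auto
        next
          case a' then show ?thesis using i AD1 by (simp add: Int_commute)
        next
          case b' then show ?thesis using i BD1 by (simp add: Int_commute)
        qed
      next
        case a
        consider (i') T' where "T' \<in> D" "S' = f ` T'" | (a') "S' = topA h" | (b') "S' = topB h"
          using S' unfolding D'_def D1_def by auto
        then show ?thesis
        proof cases
          case i' then show ?thesis using a AD1 by simp
        next
          case a' then show ?thesis using a ne by simp
        next
          case b' then show ?thesis using a AB by simp
        qed
      next
        case b
        consider (i') T' where "T' \<in> D" "S' = f ` T'" | (a') "S' = topA h" | (b') "S' = topB h"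
          using S' unfolding D'_def D1_def by auto
        then show ?thesis
        proof cases
          case i' then show ?thesis using b BD1 by simp
        next
          case a' then show ?thesis using b AB by (simp add: Int_commute)
        next
          case b' then show ?thesis using b ne by simp
        qed
      qed
    qed
  qed
  have UD': "\<Union>D' = unit_square"
  proof -
    have "\<Union>D1 = f ` \<Union>D" unfolding D1_def by auto
    also have "\<dots> = {0..1} \<times> {0..h}" unfolding U f_def by (rule stretch_square[OF h0])
    finally have "\<Union>D' = {0..1} \<times> {0..h} \<union> (topA h \<union> topB h)" unfolding D'_def by auto
    also have "\<dots> = {0..1} \<times> {0..h} \<union> {0..1} \<times> {h..1}" using top_union[OF h0 h1] by simp
    also have "\<dots> = unit_square" unfolding unit_square_def using h0 h1 by auto
    finally show ?thesis .
  qed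
  have dissD': "dissection unit_square D'"
    unfolding dissection_def using finD' triD' disjD' UD' by blast
  have areaD1: "\<And>T. T \<in> D \<Longrightarrow> area (f ` T) = h * area T"
    unfolding f_def using h0 tri by (simp add: stretch_area_tri)
  have areaA: "area (topA h) = 1 / real (n+2)" using top_areas(1)[OF h0 h1] htop by simp
  have areaB: "area (topB h) = 1 / real (n+2)" using top_areas(2)[OF h0 h1] htop by simp
  define M where "M = Max (area ` D)"
  define m where "m = Min (area ` D)"
  have finA: "finite (area ` D)" "area ` D \<noteq> {}" using finD Dne by auto
  have leM: "\<And>T. T \<in> D \<Longrightarrow> area T \<le> M" unfolding M_def using finA by simp
  have gem: "\<And>T. T \<in> D \<Longrightarrow> m \<le> area T" unfolding m_def using finA by simp
  obtain TM where TM: "TM \<in> D" "area TM = M" unfolding M_def using Max_in[OF finA] by auto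
  obtain Tm where Tm: "Tm \<in> D" "area Tm = m" unfolding m_def using Min_in[OF finA] by auto
  have "1 \<le> real n * M" using sum_bounded_above[of D area M] leM sumD assms(2) by simp
  then have meanM: "1 / real n \<le> M" using n1 by (simp add: field_simps)
  have "real n * m \<le> 1" using sum_bounded_below[of D m area] gem sumD assms(2) by simp
  then have meanm: "m \<le> 1 / real n" using n1 by (simp add: field_simps)
  have topM: "1 / real (n+2) \<le> h * M"
    using mult_left_mono[OF meanM, of h] h0 hn by simp
  have topm: "h * m \<le> 1 / real (n+2)"
    using mult_left_mono[OF meanm, of h] h0 hn by simp
  have areaD': "\<And>S. S \<in> D' \<Longrightarrow> (\<exists>T\<in>D. S = f ` T \<and> area S = h * area T) \<or> area S = 1 / real (n+2)"
    unfolding D'_def D1_def using areaD1 areaA areaB by auto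
  have finAD': "finite (area ` D')" using finD' by simp
  have MaxD': "Max (area ` D') = h * M"
  proof (rule Max_eqI[OF finAD'])
    show "y \<le> h * M" if "y \<in> area ` D'" for y
    proof -
      obtain S where S: "S \<in> D'" "y = area S" using \<open>y \<in> area ` D'\<close> by auto
      show ?thesis using areaD'[OF S(1)] S(2) topM leM h0
        by (auto intro: mult_left_mono)
    qed
    have "f ` TM \<in> D'" unfolding D'_def D1_def using TM by auto
    then show "h * M \<in> area ` D'" using areaD1[OF TM(1)] TM(2) by (metis image_eqI)
  qed
  have MinD': "Min (area ` D') = h * m"
  proof (rule Min_eqI[OF finAD'])
    show "h * m \<le> y" if "y \<in> area ` D'" for y
    proof -
      obtain S where S: "S \<in> D'" "y = area S" using \<open>y \<in> area ` D'\<close> by auto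
      show ?thesis using areaD'[OF S(1)] S(2) topm gem h0
        by (auto intro: mult_left_mono)
    qed
    have "f ` Tm \<in> D'" unfolding D'_def D1_def using Tm by auto
    then show "h * m \<in> area ` D'" using areaD1[OF Tm(1)] Tm(2) by (metis image_eqI)
  qed
  have D'ne: "D' \<noteq> {}" unfolding D'_def by simp
  have range: "range_diss D' = h * range_diss D"
    using range_diss_eq[OF finD' D'ne] range_diss_eq[OF finD Dne] MaxD' MinD'
    unfolding M_def m_def by (simp add: right_diff_distrib)
  define S where "S = (\<Sum>T\<in>D. (area T - 1 / real n)\<^sup>2)"
  have S0: "S \<ge> 0" unfolding S_def by (simp add: sum_nonneg)
  have sum1: "(\<Sum>T\<in>D1. (area T - 1 / real (n+2))\<^sup>2) = h\<^sup>2 * S"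
  proof -
    have "(\<Sum>T\<in>D1. (area T - 1 / real (n+2))\<^sup>2) = (\<Sum>T\<in>D. (area (f ` T) - 1 / real (n+2))\<^sup>2)"
      unfolding D1_def by (rule sum.reindex[OF injD, unfolded comp_def])
    also have "\<dots> = (\<Sum>T\<in>D. h\<^sup>2 * (area T - 1 / real n)\<^sup>2)"
    proof (rule sum.cong[OF refl])
      fix T assume "T \<in> D"
      have "area (f ` T) - 1 / real (n+2) = h * (area T - 1 / real n)"
        using areaD1[OF \<open>T \<in> D\<close>] hn by (simp add: right_diff_distrib)
      then show "(area (f ` T) - 1 / real (n+2))\<^sup>2 = h\<^sup>2 * (area T - 1 / real n)\<^sup>2"
        by (simp add: power_mult_distrib)
    qed
    also have "\<dots> = h\<^sup>2 * S" unfolding S_def by (simp add: sum_distrib_left)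
    finally show ?thesis .
  qed
  have sumD': "(\<Sum>T\<in>D'. (area T - 1 / real (n+2))\<^sup>2) = h\<^sup>2 * S"
  proof -
    have "(\<Sum>T\<in>D'. (area T - 1 / real (n+2))\<^sup>2) =
          (\<Sum>T\<in>D1. (area T - 1 / real (n+2))\<^sup>2) + (\<Sum>T\<in>{topA h, topB h}. (area T - 1 / real (n+2))\<^sup>2)"
      unfolding D'_def using finD1 A_notin B_notin by (intro sum.union_disjoint) auto
    also have "(\<Sum>T\<in>{topA h, topB h}. (area T - 1 / real (n+2))\<^sup>2) = 0"
      using ABne areaA areaB by simp
    finally show ?thesis using sum1 by simp
  qed
  have rmsD: "rms_diss unit_square D = sqrt (S / real n)"
    unfolding rms_diss_def S_def sq_area assms(2) by simp
  have rmsD': "rms_diss unit_square D' = sqrt (h ^ 3 * (S / real n))"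
  proof -
    have "rms_diss unit_square D' = sqrt (1 / real (n+2) * (h\<^sup>2 * S))"
      unfolding rms_diss_def sq_area cardD' sumD' by simp
    also have "1 / real (n+2) * (h\<^sup>2 * S) = h ^ 3 * (S / real n)"
      using hn n1 by (simp add: power2_eq_square power3_eq_cube field_simps)
    finally show ?thesis .
  qed
  have pw: "h powr (3/2) = sqrt (h ^ 3)"
  proof -
    have "h powr (3/2) = (h powr 3) powr (1/2)" by (simp add: powr_powr)
    also have "h powr 3 = h ^ 3" using h0 powr_realpow[OF h0, of 3] by simp
    also have "(h ^ 3) powr (1/2) = sqrt (h ^ 3)" using h0 by (simp add: powr_half_sqrt)
    finally show ?thesis .
  qed
  have rms: "rms_diss unit_square D' = h powr (3/2) * rms_diss unit_square D"
    unfolding rmsD rmsD' pw by (rule real_sqrt_mult)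
  show ?thesis
    using dissD' cardD' range rms unfolding h_def by blast
qed

end
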